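(* Let $(S,+)$ be a commutative cancellative semigroup with no identity element such that its difference group $S-S$ carries a multiplication $\cdot$ making $(S-S,+,\cdot)$ an integral domain. Suppose $\kappa$ is an infinite regular cardinal, $|S|=\kappa$, and $((S-S)\setminus\{0\},\cdot)$ is a very weakly cancellative semigroup. Then every PP-rich set in $S$ has cardinality $\kappa$.
   Context: $S-S=\{a-b:a,b\in S\}$ is the difference group of $S$. $\mathbb{P}$ is the set of polynomial functions $S-S\to S-S$ in one variable with coefficients in $S-S$ and zero constant term; $\mathcal{P}_f(\mathbb{P})$ the set of its nonempty finite subsets. $A\subseteq S$ is PP-rich if for every $R\in\mathcal{P}_f(\mathbb{P})$ there exist $a,x\in S$ with $\{a+f(x): f\in R\}\subseteq A$. An infinite semigroup $(T,\cdot)$ of cardinality $\nu$ is very weakly cancellative if the union of fewer than $\nu$ sets of the form $\{x: a x=b\}$ has cardinality $<\nu$, and likewise for sets of the form $\{x: x a=b\}$. *)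

theory Defs
  imports Main "HOL-Computational_Algebra.Polynomial"
begin

text \<open>The semigroup (S,+) is modelled as a subset of the additive group of an
integral domain 'a, closed under +, whose differences exhaust 'a
(so 'a is the difference group S - S with its given ring structure).\<close>

definition diff_set :: "'a::ab_group_add set \<Rightarrow> 'a set" where
  "diff_set S = {a - b | a b. a \<in> S \<and> b \<in> S}"

definition PP :: "('a::comm_ring_1 \<Rightarrow> 'a) set" where
  "PP = {(\<lambda>x. poly p x) | p. coeff p 0 = 0}"

definition PP_rich :: "'a::comm_ring_1 set \<Rightarrow> 'a set \<Rightarrow> bool" where
  "PP_rich S A \<longleftrightarrow> A \<subseteq> S \<and>
     (\<forall>R. finite R \<and> R \<noteq> {} \<and> R \<subseteq> PP \<longrightarrow>
        (\<exists>a\<in>S. \<exists>x\<in>S. (\<forall>f\<in>R. a + f x \<in> A)))"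

definition very_weakly_cancellative :: "'a::times set \<Rightarrow> bool" where
  "very_weakly_cancellative T \<longleftrightarrow> infinite T \<and> (\<forall>x\<in>T. \<forall>y\<in>T. x * y \<in> T) \<and>
     (\<forall>P. P \<subseteq> T \<times> T \<and> ordLess2 (card_of P) (card_of T) \<longrightarrow>
        ordLess2 (card_of (\<Union>(a,b)\<in>P. {x\<in>T. a * x = b})) (card_of T) \<and>
        ordLess2 (card_of (\<Union>(a,b)\<in>P. {x\<in>T. x * a = b})) (card_of T))"

end

theory Submission
  imports Defs
begin

unbundle cardinal_syntax

lemma small_times:
  assumes "|X| <o |S|" "infinite S"
  shows "|X \<times> X| <o |S|"
proof (cases "finite X")
  case True
  then have "finite (X \<times> X)" by simp
  then show ?thesis using assms(2)
    finite_ordLess_infinite[OF card_of_Well_order card_of_Well_order, of "X \<times> X" S]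
    unfolding Field_card_of by blast
next
  case False
  then have "|X \<times> X| =o |X|" by (rule card_of_Times_same_infinite)
  then show ?thesis using assms(1) ordIso_ordLess_trans by blast
qed

theorem theorem5p6:
  fixes S :: "'a::idom set"
  assumes semigroup: "\<forall>x\<in>S. \<forall>y\<in>S. x + y \<in> S"
    and diff_group: "diff_set S = UNIV"
    and no_identity: "\<not> (\<exists>e\<in>S. \<forall>s\<in>S. e + s = s)"
    and kappa_infinite: "infinite S"
    and kappa_regular: "regularCard (card_of S)"
    and vwc: "very_weakly_cancellative (UNIV - {0::'a})"
    and rich: "PP_rich S A"
  shows "ordIso2 (card_of A) (card_of S)"
proof -
  have AS: "A \<subseteq> S" using rich unfolding PP_rich_def by blast
  have le: "|A| \<le>o |S|" using AS card_of_mono1 by blast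
  have z: "0 \<notin> S" using no_identity by force
  have "|S| \<le>o |A|"
  proof (rule ccontr)
    assume "\<not> |S| \<le>o |A|"
    then have lt: "|A| <o |S|" using not_ordLeq_iff_ordLess[OF card_of_Well_order card_of_Well_order, of S A] by blast
    define D where "D = (\<lambda>(u,v). u - v) ` (A \<times> A)"
    have "|D| \<le>o |A \<times> A|" unfolding D_def by (rule card_of_image)
    then have Dlt: "|D| <o |S|" using small_times[OF lt kappa_infinite] ordLeq_ordLess_trans by blast
    define T where "T = (UNIV - {0::'a})"
    define P where "P = (D - {0}) \<times> (D - {0})"
    have ST: "|S| \<le>o |T|" using z unfolding T_def by (intro card_of_mono1) auto
    have "|P| \<le>o |D \<times> D|" unfolding P_def by (intro card_of_mono1) auto
    then have "|P| <o |S|" using small_times[OF Dlt kappa_infinite] ordLeq_ordLess_trans by blast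
    then have Plt: "|P| <o |T|" using ST ordLess_ordLeq_trans by blast
    have PT: "P \<subseteq> T \<times> T" unfolding P_def T_def by auto
    define U where "U = (\<Union>(a,b)\<in>P. {x\<in>T. a * x = b})"
    have "\<forall>P. P \<subseteq> T \<times> T \<and> |P| <o |T| \<longrightarrow>
        |\<Union>(a,b)\<in>P. {x\<in>T. a * x = b}| <o |T| \<and> |\<Union>(a,b)\<in>P. {x\<in>T. x * a = b}| <o |T|"
      using vwc unfolding very_weakly_cancellative_def T_def by (elim conjE)
    then have Ult: "|U| <o |T|" using Plt PT unfolding U_def by (elim allE[of _ P]) simp
    have "\<not> T \<subseteq> U"
    proof
      assume "T \<subseteq> U"
      then have "|T| \<le>o |U|" by (rule card_of_mono1)
      then show False using Ult not_ordLess_ordLeq by blast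
    qed
    then obtain c where cT: "c \<in> T" and cU: "c \<notin> U" by blast
    define R :: "('a \<Rightarrow> 'a) set" where "R = {\<lambda>x. 0, \<lambda>x. x, \<lambda>x. c * x}"
    have r1: "(\<lambda>x. 0::'a) \<in> PP" unfolding PP_def
      by (intro CollectI exI[of _ "0::'a poly"]) (simp add: fun_eq_iff)
    have r2: "(\<lambda>x. x::'a) \<in> PP" unfolding PP_def
      by (intro CollectI exI[of _ "[:0, 1::'a:]"]) (simp add: fun_eq_iff)
    have r3: "(\<lambda>x. c * x) \<in> PP" unfolding PP_def
      by (intro CollectI exI[of _ "[:0, c:]"]) (simp add: fun_eq_iff mult.commute)
    have "finite R \<and> R \<noteq> {} \<and> R \<subseteq> PP" unfolding R_def using r1 r2 r3 by auto
    then obtain a x where aS: "a \<in> S" and xS: "x \<in> S" and H: "\<forall>f\<in>R. a + f x \<in> A"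
      using rich unfolding PP_rich_def by (elim conjE allE[of _ R]) blast
    have h1: "a \<in> A" using H unfolding R_def by auto
    have h2: "a + x \<in> A" using H unfolding R_def by auto
    have h3: "a + c * x \<in> A" using H unfolding R_def by auto
    have x0: "x \<noteq> 0" using xS z by auto
    have c0: "c \<noteq> 0" using cT unfolding T_def by auto
    have xD: "x \<in> D" unfolding D_def using h1 h2 by (intro image_eqI[of _ _ "(a + x, a)"]) auto
    have cxD: "c * x \<in> D" unfolding D_def using h1 h3 by (intro image_eqI[of _ _ "(a + c * x, a)"]) auto
    have "(x, c * x) \<in> P" unfolding P_def using xD cxD x0 c0 by auto
    then have "c \<in> U" unfolding U_def using cT by (auto simp: mult.commute)
    then show False using cU by blast
  qed
  then show ?thesis using le ordIso_iff_ordLeq by blast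
qed

end
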